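(* Let $\alpha>0$, $\beta\ge0$, $\lambda\in[0,1]$ and $z\notin\operatorname{argmin}\phi$. For every $t\in(0,\tau_1)$, $$\langle\dot x_z(t),\ddot x_z(t)\rangle+\lambda\frac{\alpha}{t}\|\dot x_z(t)\|^2\ge G(t)\,\frac{t\,\|\nabla\phi(z)\|^2}{(\alpha+1)^2H(t)^2},$$ where $$G(t)=(1+\alpha\lambda)H(t)^2-\alpha(1-\lambda)\big(1-H(t)\big)^2-\beta Lt-\frac{Lt^2}{2}-\big|1+\alpha(2\lambda-1)\big|\,H(t)\big(1-H(t)\big).$$
   Context: Let $\phi:\mathbb{R}^n\to\mathbb{R}$ be twice continuously differentiable and convex with $L$-Lipschitz gradient, attaining its minimum. For $z\in\mathbb{R}^n$, $x_z$ is the unique $C^1([0,\infty))\cap C^2((0,\infty))$ solution of $\ddot x(t)+\frac{\alpha}{t}\dot x(t)+\beta\nabla^2\phi(x(t))\dot x(t)+\nabla\phi(x(t))=0$ ($t>0$), $x(0)=z$, $\dot x(0)=0$. Define $H(t)=1-\frac{\beta Lt}{\alpha+2}-\frac{Lt^2}{2(\alpha+3)}$ and let $\tau_1=-\frac{\alpha+3}{\alpha+2}\beta+\sqrt{\left(\frac{\alpha+3}{\alpha+2}\right)^2\beta^2+\frac{2(\alpha+3)}{L}}$ be its unique positive zero. *)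

theory Defs
  imports "HOL-Analysis.Analysis"
begin

definition Hfun :: "real \<Rightarrow> real \<Rightarrow> real \<Rightarrow> real \<Rightarrow> real" where
  "Hfun \<alpha> \<beta> L t = 1 - \<beta> * L * t / (\<alpha> + 2) - L * t^2 / (2 * (\<alpha> + 3))"

text \<open>The unique positive zero tau_1 of H.\<close>
definition tau1 :: "real \<Rightarrow> real \<Rightarrow> real \<Rightarrow> real" where
  "tau1 \<alpha> \<beta> L = - ((\<alpha> + 3) / (\<alpha> + 2)) * \<beta>
      + sqrt (((\<alpha> + 3) / (\<alpha> + 2))^2 * \<beta>^2 + 2 * (\<alpha> + 3) / L)"

definition Gfun :: "real \<Rightarrow> real \<Rightarrow> real \<Rightarrow> real \<Rightarrow> real \<Rightarrow> real" where
  "Gfun \<alpha> \<beta> L lam t =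
     (let H = Hfun \<alpha> \<beta> L t in
      (1 + \<alpha> * lam) * H^2 - \<alpha> * (1 - lam) * (1 - H)^2 - \<beta> * L * t - L * t^2 / 2
      - \<bar>1 + \<alpha> * (2 * lam - 1)\<bar> * H * (1 - H))"

end

theory Submission
  imports Defs
begin


lemma inner_vec_deriv:
  fixes F :: "real \<Rightarrow> 'a::real_inner"
  assumes "(F has_vector_derivative F') (at s)"
  shows "((\<lambda>r. inner (F r) u) has_real_derivative inner F' u) (at s)"
proof -
  have "((\<lambda>r. inner (F r) u) has_derivative (\<lambda>r. inner (r *\<^sub>R F') u)) (at s)"
    using assms unfolding has_vector_derivative_def by (rule has_derivative_inner_left)
  moreover have "(\<lambda>r. inner (r *\<^sub>R F') u) = (*) (inner F' u)" by (auto simp: fun_eq_iff)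
  ultimately show ?thesis unfolding has_field_derivative_def by simp
qed

lemma mvt_norm:
  fixes F :: "real \<Rightarrow> 'a::real_inner"
  assumes ab: "a \<le> b" and cF: "continuous_on {a..b} F" and ch: "continuous_on {a..b} h"
    and dF: "\<And>s. a<s \<Longrightarrow> s<b \<Longrightarrow> (F has_vector_derivative F' s) (at s)"
    and dh: "\<And>s. a<s \<Longrightarrow> s<b \<Longrightarrow> (h has_real_derivative h' s) (at s)"
    and bd: "\<And>s. a<s \<Longrightarrow> s<b \<Longrightarrow> norm (F' s) \<le> h' s"
  shows "norm (F b - F a) \<le> h b - h a"
proof -
  have hmono: "h a \<le> h b"
  proof (rule DERIV_nonneg_imp_increasing_open[OF ab _ ch])
    fix s assume "a < s" "s < b"
    then show "\<exists>y. (h has_real_derivative y) (at s) \<and> 0 \<le> y"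
      using dh bd norm_ge_zero order_trans by blast
  qed
  define u where "u = F b - F a"
  define \<psi> where "\<psi> s = h s * norm u - inner (F s) u" for s
  have "\<psi> a \<le> \<psi> b"
  proof (rule DERIV_nonneg_imp_increasing_open[OF ab])
    fix s assume s: "a < s" "s < b"
    have "(\<psi> has_real_derivative h' s * norm u - inner (F' s) u) (at s)"
      unfolding \<psi>_def
      by (intro DERIV_diff DERIV_cmult_right dh s inner_vec_deriv dF)
    moreover have "inner (F' s) u \<le> h' s * norm u"
      using Cauchy_Schwarz_ineq2[of "F' s" u] bd[OF s] 
      by (meson abs_le_D1 mult_right_mono norm_ge_zero order_trans)
    ultimately show "\<exists>y. (\<psi> has_real_derivative y) (at s) \<and> 0 \<le> y" by force
  next
    show "continuous_on {a..b} \<psi>" unfolding \<psi>_def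
      by (intro continuous_intros cF ch)
  qed
  then have "inner u u \<le> (h b - h a) * norm u"
    unfolding \<psi>_def u_def by (simp add: algebra_simps inner_diff_left)
  then have "norm u * norm u \<le> (h b - h a) * norm u"
    by (simp add: power2_eq_square[symmetric] power2_norm_eq_inner)
  then show ?thesis using hmono unfolding u_def[symmetric]
    by (cases "norm u = 0") (auto simp: mult_le_cancel_right)
qed




lemma deriv_lipschitz_bound:
  fixes f :: "'a::real_normed_vector \<Rightarrow> 'b::real_normed_vector"
  assumes fd: "(f has_derivative D) (at y)"
    and lip: "\<And>u v. norm (f u - f v) \<le> L * norm (u - v)"
  shows "norm (D h) \<le> L * norm h"
proof (rule ccontr)
  assume neg: "\<not> ?thesis"
  have lin: "linear D" using fd has_derivative_linear by blast
  have h0: "h \<noteq> 0" using neg lin by (auto simp: linear_0)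
  then have nh: "norm h > 0" by simp
  define \<epsilon> where "\<epsilon> = (norm (D h) - L * norm h) / norm h"
  have ep: "\<epsilon> > 0" using neg nh unfolding \<epsilon>_def by simp
  have lim: "((\<lambda>k. norm (f (y + k) - f y - D k) / norm k) \<longlongrightarrow> 0) (at 0)"
    using fd unfolding has_derivative_at by blast
  from tendstoD[OF lim ep] obtain d where d: "d > 0"
    and dd: "\<And>k. k \<noteq> 0 \<Longrightarrow> dist k 0 < d \<Longrightarrow> dist (norm (f (y + k) - f y - D k) / norm k) 0 < \<epsilon>"
    unfolding eventually_at by blast
  define r where "r = d / (2 * norm h)"
  have r: "r > 0" using d nh unfolding r_def by simp
  define k where "k = r *\<^sub>R h"
  have nk: "norm k = d/2" using nh r d unfolding k_def r_def by simp
  have k0: "k \<noteq> 0" using nk d by auto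
  have "norm (f (y + k) - f y - D k) / norm k < \<epsilon>"
  proof -
    have "dist k 0 < d" using nk d by simp
    from dd[OF k0 this] show ?thesis by simp
  qed
  then have A: "norm (f (y + k) - f y - D k) < \<epsilon> * norm k"
    using k0 by (simp add: divide_less_eq)
  have Dk: "D k = r *\<^sub>R D h" unfolding k_def using lin by (simp add: linear_scale)
  have B: "norm (f (y + k) - f y) \<le> L * (r * norm h)"
    using lip[of "y + k" y] r unfolding k_def by simp
  have "r * norm (D h) = norm (D k)" using Dk r by simp
  also have "\<dots> \<le> norm (f (y + k) - f y) + norm (f (y + k) - f y - D k)"
    by (metis add.commute diff_add_cancel norm_triangle_ineq4 diff_diff_eq2 norm_minus_commute
          norm_triangle_sub)
  also have "\<dots> < L * (r * norm h) + \<epsilon> * norm k" using A B by simp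
  also have "\<epsilon> * norm k = r * (norm (D h) - L * norm h)"
    unfolding \<epsilon>_def k_def using nh r by (simp add: field_simps)
  finally show False by (simp add: algebra_simps)
qed




lemma H_pos:
  assumes a: "\<alpha> > 0" and b: "\<beta> \<ge> 0" and L: "L > 0" and t: "0 \<le> t" "t < tau1 \<alpha> \<beta> L"
  shows "Hfun \<alpha> \<beta> L t > 0"
proof -
  define a where "a = (\<alpha> + 3) / (\<alpha> + 2)"
  define S where "S = sqrt (a^2 * \<beta>^2 + 2 * (\<alpha> + 3) / L)"
  have S2: "S^2 = a^2 * \<beta>^2 + 2 * (\<alpha> + 3) / L"
    unfolding S_def using a L by (intro real_sqrt_pow2) (auto intro!: add_nonneg_nonneg)
  have apos: "a > 0" unfolding a_def using a by simp
  have lt: "t + a * \<beta> < S" using t unfolding tau1_def a_def[symmetric] S_def[symmetric] by simp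
  have ge: "0 \<le> t + a * \<beta>" using t apos b by simp
  have sq: "(t + a * \<beta>)^2 < S^2" using lt ge by (intro power_strict_mono) auto
  have eq: "Hfun \<alpha> \<beta> L t = L / (2 * (\<alpha> + 3)) * (S^2 - (t + a * \<beta>)^2)"
  proof -
    have "S^2 - (t + a * \<beta>)^2 = 2 * (\<alpha> + 3) / L - t^2 - 2 * t * a * \<beta>"
      unfolding S2 by (simp add: power2_eq_square algebra_simps)
    then have "L / (2 * (\<alpha> + 3)) * (S^2 - (t + a * \<beta>)^2)
       = L / (2 * (\<alpha> + 3)) * (2 * (\<alpha> + 3) / L) - L / (2 * (\<alpha> + 3)) * t^2
         - L / (2 * (\<alpha> + 3)) * (2 * t * a * \<beta>)"
      by (simp only: right_diff_distrib)
    also have "L / (2 * (\<alpha> + 3)) * t^2 = L * t^2 / (2 * (\<alpha> + 3))" by simp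
    also have "L / (2 * (\<alpha> + 3)) * (2 * t * a * \<beta>) = L * t * \<beta> * (a / (\<alpha> + 3))"
      using a by (simp add: field_simps)
    also have "a / (\<alpha> + 3) = 1 / (\<alpha> + 2)" unfolding a_def using a by simp
    also have "L / (2 * (\<alpha> + 3)) * (2 * (\<alpha> + 3) / L) = 1" using a L by simp
    finally show ?thesis unfolding Hfun_def by (simp add: algebra_simps)
  qed
  show ?thesis unfolding eq using sq L a by (simp add: mult_pos_pos)
qed

lemma H_mono:
  assumes a: "\<alpha> > 0" and b: "\<beta> \<ge> 0" and L: "L > 0" and st: "0 \<le> s" "s \<le> t"
  shows "Hfun \<alpha> \<beta> L t \<le> Hfun \<alpha> \<beta> L s"
proof -
  have 1: "\<beta> * L * s / (\<alpha> + 2) \<le> \<beta> * L * t / (\<alpha> + 2)"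
    using a b L st by (intro divide_right_mono mult_left_mono) auto
  have 2: "L * s^2 / (2 * (\<alpha> + 3)) \<le> L * t^2 / (2 * (\<alpha> + 3))"
    using a b L st by (intro divide_right_mono mult_left_mono power_mono) auto
  show ?thesis unfolding Hfun_def using 1 2 by linarith
qed

lemma H_le1:
  assumes a: "\<alpha> > 0" and b: "\<beta> \<ge> 0" and L: "L > 0" and st: "0 \<le> t"
  shows "Hfun \<alpha> \<beta> L t \<le> 1"
  using H_mono[OF a b L order_refl st] by (simp add: Hfun_def)




lemma final_alg:
  fixes v e w gz hv gx :: "'a::real_inner"
  assumes t: "t > 0" and a: "\<alpha> > 0" and lam: "0 \<le> lam" "lam \<le> 1" and b: "\<beta> \<ge> 0" and L: "L > 0"
    and H: "0 < H" "H \<le> 1" and c: "c \<ge> 0"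
    and ve: "v = e - w" and gz: "gz = ((\<alpha>+1)/t) *\<^sub>R w" and nw: "norm w = c*t"
    and ne: "norm e \<le> c*t*(1-H)/H"
    and hv: "inner v hv \<le> L * (c*t/H)^2"
    and gx: "inner v (gx - gz) \<le> L*t^2/2 * (c^2*t/H^2)"
  shows "inner v (-(\<alpha>/t) *\<^sub>R v - \<beta> *\<^sub>R hv - gx) + lam*(\<alpha>/t)*(norm v)^2 \<ge>
    ((1+\<alpha>*lam)*H^2 - \<alpha>*(1-lam)*(1-H)^2 - \<beta>*L*t - L*t^2/2 - \<bar>1+\<alpha>*(2*lam-1)\<bar>*H*(1-H)) * (c^2*t/H^2)"
proof -
  define k where "k = 1+\<alpha>*(2*lam-1)"
  define E0 where "E0 = c*t*(1-H)/H"
  define ew where "ew = inner e w"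
  have E0: "E0 \<ge> 0" unfolding E0_def using c t H by simp
  have nv2: "(norm v)^2 = (norm e)^2 - 2*ew + (norm w)^2"
    unfolding ve ew_def by (simp add: power2_norm_eq_inner inner_diff_left inner_diff_right inner_commute)
  have vgz: "inner v gz = ((\<alpha>+1)/t) * (ew - (norm w)^2)"
    unfolding ve gz ew_def by (simp add: power2_norm_eq_inner inner_diff_left algebra_simps)
  have lhs: "inner v (-(\<alpha>/t) *\<^sub>R v - \<beta> *\<^sub>R hv - gx) + lam*(\<alpha>/t)*(norm v)^2
     = (-(1-lam)*(\<alpha>/t)*(norm v)^2 - inner v gz) - \<beta> * inner v hv - inner v (gx - gz)"
    by (simp add: inner_diff_right power2_norm_eq_inner algebra_simps diff_divide_distrib)
  have P: "-(1-lam)*(\<alpha>/t)*(norm v)^2 - inner v gz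
     = (1/t) * ((1+\<alpha>*lam)*(norm w)^2 - k*ew - \<alpha>*(1-lam)*(norm e)^2)"
    unfolding nv2 vgz k_def using t by (simp add: field_simps)
  have ewb: "\<bar>ew\<bar> \<le> E0 * (c*t)"
  proof -
    have "\<bar>ew\<bar> \<le> norm e * norm w" unfolding ew_def by (rule Cauchy_Schwarz_ineq2)
    also have "\<dots> \<le> E0 * (c*t)" unfolding nw E0_def using ne c t by (intro mult_right_mono) auto
    finally show ?thesis .
  qed
  have kew: "k*ew \<le> \<bar>k\<bar> * (E0 * (c*t))"
  proof -
    have "k*ew \<le> \<bar>k\<bar> * \<bar>ew\<bar>" by (metis abs_ge_self abs_mult)
    also have "\<dots> \<le> \<bar>k\<bar> * (E0 * (c*t))" using ewb by (intro mult_left_mono) auto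
    finally show ?thesis .
  qed
  have ne2: "(norm e)^2 \<le> E0^2" using ne unfolding E0_def[symmetric] by (intro power_mono) auto
  have a1: "\<alpha>*(1-lam) \<ge> 0" using a lam by simp
  have Pb: "(1+\<alpha>*lam)*(norm w)^2 - k*ew - \<alpha>*(1-lam)*(norm e)^2
       \<ge> (1+\<alpha>*lam)*(c*t)^2 - \<bar>k\<bar> * (E0 * (c*t)) - \<alpha>*(1-lam)*E0^2"
    using kew mult_left_mono[OF ne2 a1] unfolding nw by linarith
  have Peq: "(1/t) * ((1+\<alpha>*lam)*(c*t)^2 - \<bar>k\<bar> * (E0 * (c*t)) - \<alpha>*(1-lam)*E0^2)
      = ((1+\<alpha>*lam)*H^2 - \<alpha>*(1-lam)*(1-H)^2 - \<bar>k\<bar>*H*(1-H)) * (c^2*t/H^2)"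
    unfolding E0_def using t H by (simp add: field_simps power2_eq_square)
  have PP: "-(1-lam)*(\<alpha>/t)*(norm v)^2 - inner v gz \<ge>
     ((1+\<alpha>*lam)*H^2 - \<alpha>*(1-lam)*(1-H)^2 - \<bar>k\<bar>*H*(1-H)) * (c^2*t/H^2)"
    unfolding P Peq[symmetric] using Pb t by (intro mult_left_mono) auto
  have hb: "\<beta> * inner v hv \<le> \<beta>*L*t * (c^2*t/H^2)"
  proof -
    have "\<beta> * inner v hv \<le> \<beta> * (L * (c*t/H)^2)" using hv b by (rule mult_left_mono)
    also have "\<dots> = \<beta>*L*t * (c^2*t/H^2)" by (simp add: power2_eq_square field_simps)
    finally show ?thesis .
  qed
  show ?thesis unfolding lhs using PP hb gx unfolding k_def by (simp add: algebra_simps)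
qed


theorem mainTheorem4:
  fixes \<phi> :: "'a::euclidean_space \<Rightarrow> real"
    and grad :: "'a \<Rightarrow> 'a"
    and hess :: "'a \<Rightarrow> ('a \<Rightarrow>\<^sub>L 'a)"
    and L \<alpha> \<beta> lam :: real
    and z :: 'a
    and x x' x'' :: "real \<Rightarrow> 'a"
  assumes grad: "\<And>y. (\<phi> has_derivative (\<lambda>h. grad y \<bullet> h)) (at y)"
    and hess: "\<And>y. (grad has_derivative blinfun_apply (hess y)) (at y)"
    and hess_cont: "continuous_on UNIV hess"
    and convex: "convex_on UNIV \<phi>"
    and L_pos: "L > 0"
    and lipschitz: "\<And>u v. norm (grad u - grad v) \<le> L * norm (u - v)"
    and has_min: "\<exists>m. \<forall>y. \<phi> m \<le> \<phi> y"
    and alpha_pos: "\<alpha> > 0"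
    and beta_nonneg: "\<beta> \<ge> 0"
    and lambda: "lam \<in> {0..1}"
    and z_not_min: "z \<notin> {m. \<forall>y. \<phi> m \<le> \<phi> y}"
    and x_deriv: "\<And>t. t \<ge> 0 \<Longrightarrow> (x has_vector_derivative x' t) (at t within {0..})"
    and x'_cont: "continuous_on {0..} x'"
    and x'_deriv: "\<And>t. t > 0 \<Longrightarrow> (x' has_vector_derivative x'' t) (at t)"
    and x''_cont: "continuous_on {0<..} x''"
    and ode: "\<And>t. t > 0 \<Longrightarrow>
       x'' t + (\<alpha> / t) *\<^sub>R x' t + \<beta> *\<^sub>R (hess (x t) (x' t)) + grad (x t) = 0"
    and init_pos: "x 0 = z"
    and init_vel: "x' 0 = 0"
  shows "\<forall>t \<in> {0<..<tau1 \<alpha> \<beta> L}.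
     x' t \<bullet> x'' t + lam * (\<alpha> / t) * (norm (x' t))^2
       \<ge> Gfun \<alpha> \<beta> L lam t * (t * (norm (grad z))^2 / ((\<alpha> + 1)^2 * (Hfun \<alpha> \<beta> L t)^2))"
proof
  have hessb: "\<And>y h. norm (hess y h) \<le> L * norm h"
    by (rule deriv_lipschitz_bound[OF hess lipschitz])
  have grad_cont: "continuous_on UNIV grad"
    using hess has_derivative_continuous continuous_at_imp_continuous_on by blast
  have x_at: "(x has_vector_derivative x' s) (at s)" if "s > 0" for s
  proof -
    have "(x has_vector_derivative x' s) (at s within {0<..})"
    proof (rule has_vector_derivative_within_subset)
      show "(x has_vector_derivative x' s) (at s within {0..})" using x_deriv that by simp
    qed auto
    then show ?thesis using that by (subst (asm) has_vector_derivative_within_open) auto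
  qed
  have x_cont: "continuous_on {0..} x"
    unfolding continuous_on_eq_continuous_within
    using x_deriv has_vector_derivative_continuous by (metis atLeast_iff)
  have xx''': "x'' s = - (\<alpha> / s) *\<^sub>R x' s - \<beta> *\<^sub>R (hess (x s) (x' s)) - grad (x s)" if "s > 0" for s
    using ode[OF that] by (simp add: algebra_simps eq_neg_iff_add_eq_0)
  fix t assume t: "t \<in> {0<..<tau1 \<alpha> \<beta> L}"
  then have t0: "t > 0" and tt: "t < tau1 \<alpha> \<beta> L" by auto
  define g0 where "g0 = grad z"
  define c where "c = norm g0 / (\<alpha> + 1)"
  define Ht where "Ht = Hfun \<alpha> \<beta> L t"
  have Ht: "Ht > 0" "Ht \<le> 1" unfolding Ht_def
    using H_pos[OF alpha_pos beta_nonneg L_pos _ tt] H_le1[OF alpha_pos beta_nonneg L_pos] t0 by auto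
  have c0: "c \<ge> 0" unfolding c_def using alpha_pos by simp
  define E where "E s = s powr \<alpha> *\<^sub>R (x' s + (s / (\<alpha> + 1)) *\<^sub>R g0)" for s
  define E' where "E' s = s powr \<alpha> *\<^sub>R (g0 - grad (x s) - \<beta> *\<^sub>R hess (x s) (x' s))" for s
  have E_deriv: "(E has_vector_derivative E' s) (at s)" if s: "s > 0" for s
  proof -
    have d1: "((\<lambda>s. s powr \<alpha>) has_real_derivative \<alpha> * s powr (\<alpha> - 1)) (at s)"
      using s by (rule has_real_derivative_powr)
    have d2: "((\<lambda>s. (s / (\<alpha> + 1)) *\<^sub>R g0) has_vector_derivative (1 / (\<alpha> + 1)) *\<^sub>R g0) (at s)"
      by (rule has_vector_derivative_eq_rhs, rule has_vector_derivative_scaleR[where g'=0],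
          use alpha_pos in \<open>auto intro!: derivative_eq_intros\<close>)
    have d3: "((\<lambda>s. x' s + (s / (\<alpha> + 1)) *\<^sub>R g0) has_vector_derivative
        x'' s + (1 / (\<alpha> + 1)) *\<^sub>R g0) (at s)"
      by (intro has_vector_derivative_add x'_deriv s d2)
    have d4: "(E has_vector_derivative
       s powr \<alpha> *\<^sub>R (x'' s + (1 / (\<alpha> + 1)) *\<^sub>R g0)
       + (\<alpha> * s powr (\<alpha> - 1)) *\<^sub>R (x' s + (s / (\<alpha> + 1)) *\<^sub>R g0)) (at s)"
      unfolding E_def by (rule has_vector_derivative_scaleR[OF d1 d3])
    have pw: "s powr (\<alpha> - 1) = s powr \<alpha> / s" using s by (simp add: powr_diff)
    have eq: "s powr \<alpha> *\<^sub>R (x'' s + (1 / (\<alpha> + 1)) *\<^sub>R g0)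
       + (\<alpha> * s powr (\<alpha> - 1)) *\<^sub>R (x' s + (s / (\<alpha> + 1)) *\<^sub>R g0) = E' s"
    proof -
      have "s powr \<alpha> *\<^sub>R (x'' s + (1 / (\<alpha> + 1)) *\<^sub>R g0)
       + (\<alpha> * s powr (\<alpha> - 1)) *\<^sub>R (x' s + (s / (\<alpha> + 1)) *\<^sub>R g0)
       = s powr \<alpha> *\<^sub>R (x'' s + (1 / (\<alpha> + 1)) *\<^sub>R g0 + (\<alpha> / s) *\<^sub>R x' s + (\<alpha> / (\<alpha> + 1)) *\<^sub>R g0)"
      proof -
        have c1: "(\<alpha> * (s powr \<alpha> / s)) *\<^sub>R x' s = s powr \<alpha> *\<^sub>R ((\<alpha> / s) *\<^sub>R x' s)"
          by (simp add: scaleR_scaleR)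
        have c2: "(\<alpha> * (s powr \<alpha> / s)) *\<^sub>R ((s / (\<alpha> + 1)) *\<^sub>R g0) = s powr \<alpha> *\<^sub>R ((\<alpha> / (\<alpha> + 1)) *\<^sub>R g0)"
          using s by (simp add: scaleR_scaleR)
        show ?thesis unfolding pw scaleR_add_right c1 c2 by (simp only: add.assoc)
      qed
      also have "x'' s + (1 / (\<alpha> + 1)) *\<^sub>R g0 + (\<alpha> / s) *\<^sub>R x' s + (\<alpha> / (\<alpha> + 1)) *\<^sub>R g0
          = g0 - grad (x s) - \<beta> *\<^sub>R hess (x s) (x' s)"
      proof -
        have "(1 / (\<alpha> + 1)) *\<^sub>R g0 + (\<alpha> / (\<alpha> + 1)) *\<^sub>R g0 = g0"
          using alpha_pos by (simp add: scaleR_add_left[symmetric] add_divide_distrib[symmetric] add.commute[of 1])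
        then show ?thesis unfolding xx'''[OF s] by (simp add: algebra_simps)
      qed
      finally show ?thesis unfolding E'_def .
    qed
    show ?thesis using d4 eq by simp
  qed
  have E_cont: "continuous_on {0..t} E"
  proof -
    have p: "continuous_on {0..t} (\<lambda>s. s powr \<alpha>)"
      by (rule continuous_on_powr') (use alpha_pos in \<open>auto intro!: continuous_intros\<close>)
    have v: "continuous_on {0..t} x'" using x'_cont by (rule continuous_on_subset) auto
    show ?thesis unfolding E_def
      by (intro continuous_on_scaleR p continuous_on_add v continuous_intros) (use alpha_pos in auto)
  qed
  have E0: "E 0 = 0" unfolding E_def using alpha_pos by simp
  have E'_norm: "norm (E' s) \<le> s powr \<alpha> * (norm (g0 - grad (x s)) + \<beta> * L * norm (x' s))" for s
  proof -
    have "norm (g0 - grad (x s) - \<beta> *\<^sub>R hess (x s) (x' s)) \<le> norm (g0 - grad (x s)) + norm (\<beta> *\<^sub>R hess (x s) (x' s))"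
      by (rule norm_triangle_ineq4)
    also have "norm (\<beta> *\<^sub>R hess (x s) (x' s)) \<le> \<beta> * (L * norm (x' s))"
      using hessb beta_nonneg by (simp add: mult_left_mono)
    finally have A: "norm (g0 - grad (x s) - \<beta> *\<^sub>R hess (x s) (x' s)) \<le> norm (g0 - grad (x s)) + \<beta> * L * norm (x' s)"
      by (simp add: algebra_simps)
    have "norm (E' s) = s powr \<alpha> * norm (g0 - grad (x s) - \<beta> *\<^sub>R hess (x s) (x' s))"
      unfolding E'_def by (simp only: norm_scaleR abs_of_nonneg[OF powr_ge_zero])
    then show ?thesis using A by (simp add: mult_left_mono)
  qed
  define \<phi>1 where "\<phi>1 s = norm (g0 - grad (x s)) + \<beta> * L * norm (x' s)" for s
  have \<phi>1_cont: "continuous_on {0..t} \<phi>1"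
  proof -
    have "continuous_on {0..t} x" using x_cont by (rule continuous_on_subset) auto
    moreover have "continuous_on {0..t} x'" using x'_cont by (rule continuous_on_subset) auto
    ultimately show ?thesis unfolding \<phi>1_def
      by (intro continuous_intros continuous_on_compose2[OF grad_cont]) auto
  qed
  obtain s1 where s1: "s1 \<in> {0..t}" and s1max: "\<And>s. s \<in> {0..t} \<Longrightarrow> \<phi>1 s \<le> \<phi>1 s1"
    using continuous_attains_sup[OF compact_Icc _ \<phi>1_cont] t0 by fastforce
  define B where "B = \<phi>1 s1"
  have Ebound: "norm (x' s + (s / (\<alpha> + 1)) *\<^sub>R g0) \<le> mb * s * qs"
    if s: "0 < s" "s \<le> t" and mbq: "mb \<ge> 0"
      and bd: "\<And>r. 0 < r \<Longrightarrow> r < s \<Longrightarrow> norm (E' r) \<le> r powr \<alpha> * (mb * r^2 * L / 2 + mb * r * \<beta> * L)"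
      and qs: "qs = \<beta> * L * s / (\<alpha> + 2) + L * s^2 / (2 * (\<alpha> + 3))"
    for s mb qs
  proof -
    define h where "h r = mb * L / (2 * (\<alpha> + 3)) * r powr (\<alpha> + 3) + mb * \<beta> * L / (\<alpha> + 2) * r powr (\<alpha> + 2)" for r
    have "norm (E s - E 0) \<le> h s - h 0"
    proof (rule mvt_norm[where F'=E' and h'="\<lambda>r. r powr \<alpha> * (mb * r^2 * L / 2 + mb * r * \<beta> * L)"])
      show "0 \<le> s" using s by simp
      show "continuous_on {0..s} E" using E_cont by (rule continuous_on_subset) (use s in auto)
      show "continuous_on {0..s} h" unfolding h_def
        by (intro continuous_intros continuous_on_powr') (use alpha_pos in auto)
      show "(E has_vector_derivative E' r) (at r)" if "0 < r" "r < s" for r using E_deriv that by simp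
      show "norm (E' r) \<le> r powr \<alpha> * (mb * r^2 * L / 2 + mb * r * \<beta> * L)" if "0 < r" "r < s" for r
        using bd that by simp
      show "(h has_real_derivative r powr \<alpha> * (mb * r^2 * L / 2 + mb * r * \<beta> * L)) (at r)"
        if r: "0 < r" "r < s" for r
      proof -
        have "(h has_real_derivative mb * L / (2 * (\<alpha> + 3)) * ((\<alpha> + 3) * r powr (\<alpha> + 3 - 1))
             + mb * \<beta> * L / (\<alpha> + 2) * ((\<alpha> + 2) * r powr (\<alpha> + 2 - 1))) (at r)"
          unfolding h_def using r by (intro DERIV_add DERIV_cmult has_real_derivative_powr) auto
        moreover have "mb * L / (2 * (\<alpha> + 3)) * ((\<alpha> + 3) * r powr (\<alpha> + 3 - 1))
             + mb * \<beta> * L / (\<alpha> + 2) * ((\<alpha> + 2) * r powr (\<alpha> + 2 - 1))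
           = r powr \<alpha> * (mb * r^2 * L / 2 + mb * r * \<beta> * L)"
        proof -
          have e1: "\<alpha> + 3 - 1 = \<alpha> + 2" "\<alpha> + 2 - 1 = \<alpha> + 1" by simp_all
          have e2: "r powr (\<alpha> + 2) = r powr \<alpha> * r^2" using r by (simp add: powr_add powr_numeral)
          have e3: "r powr (\<alpha> + 1) = r powr \<alpha> * r" using r by (simp add: powr_add)
          have gen: "\<And>a b::real. b \<noteq> 0 \<Longrightarrow> a / (2 * b) * b = a / 2" by (simp add: field_simps)
          have e4: "mb * L / (2 * (\<alpha> + 3)) * (\<alpha> + 3) = mb * L / 2"
            by (rule gen) (use alpha_pos in simp)
          have e5: "mb * \<beta> * L / (\<alpha> + 2) * (\<alpha> + 2) = mb * \<beta> * L"
            using alpha_pos by simp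
          show ?thesis unfolding e1 e2 e3 mult.assoc[symmetric] e4 e5 by (simp add: algebra_simps)
        qed
        ultimately show ?thesis by simp
      qed
    qed
    moreover have "h 0 = 0" unfolding h_def using alpha_pos by simp
    moreover have "h s = s powr \<alpha> * (mb * s * qs)"
    proof -
      have "s powr (\<alpha> + 3) = s powr \<alpha> * s^3" "s powr (\<alpha> + 2) = s powr \<alpha> * s^2" using s
        by (simp_all add: powr_add powr_numeral)
      then show ?thesis unfolding h_def qs using alpha_pos by (simp add: field_simps power2_eq_square power3_eq_cube)
    qed
    ultimately have "s powr \<alpha> * norm (x' s + (s / (\<alpha> + 1)) *\<^sub>R g0) \<le> s powr \<alpha> * (mb * s * qs)"
      unfolding E0 E_def using s by simp
    then show ?thesis using s by simp
  qed
  have step1: "norm (x' s) / s \<le> (B + norm g0) / (\<alpha> + 1)" if s: "0 < s" "s \<le> t" for s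
  proof -
    define h where "h r = B / (\<alpha> + 1) * r powr (\<alpha> + 1)" for r
    have "norm (E s - E 0) \<le> h s - h 0"
    proof (rule mvt_norm[where F'=E' and h'="\<lambda>r. B * r powr \<alpha>"])
      show "0 \<le> s" using s by simp
      show "continuous_on {0..s} E" using E_cont by (rule continuous_on_subset) (use s in auto)
      show "continuous_on {0..s} h" unfolding h_def
        by (intro continuous_intros continuous_on_powr') (use alpha_pos in auto)
      show "(E has_vector_derivative E' r) (at r)" if "0 < r" "r < s" for r using E_deriv that by simp
      show "norm (E' r) \<le> B * r powr \<alpha>" if r: "0 < r" "r < s" for r
      proof -
        have "\<phi>1 r \<le> B" unfolding B_def using s r by (intro s1max) auto
        then have "r powr \<alpha> * (norm (g0 - grad (x r)) + \<beta> * L * norm (x' r)) \<le> r powr \<alpha> * B"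
          unfolding \<phi>1_def by (intro mult_left_mono) auto
        then show ?thesis using E'_norm[of r] by (simp add: mult.commute)
      qed
      show "(h has_real_derivative B * r powr \<alpha>) (at r)" if r: "0 < r" "r < s" for r
      proof -
        have "(h has_real_derivative B / (\<alpha> + 1) * ((\<alpha> + 1) * r powr (\<alpha> + 1 - 1))) (at r)"
          unfolding h_def using r by (intro DERIV_cmult has_real_derivative_powr) auto
        moreover have "B / (\<alpha> + 1) * ((\<alpha> + 1) * r powr (\<alpha> + 1 - 1)) = B * r powr \<alpha>"
          using alpha_pos by simp
        ultimately show ?thesis by simp
      qed
    qed
    moreover have "h 0 = 0" unfolding h_def using alpha_pos by simp
    moreover have "h s = s powr \<alpha> * (B * s / (\<alpha> + 1))" unfolding h_def using s
      by (simp add: powr_add)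
    ultimately have "norm (E s) \<le> s powr \<alpha> * (B * s / (\<alpha> + 1))" using E0 by simp
    then have "s powr \<alpha> * norm (x' s + (s / (\<alpha> + 1)) *\<^sub>R g0) \<le> s powr \<alpha> * (B * s / (\<alpha> + 1))"
      unfolding E_def by (simp only: norm_scaleR abs_of_nonneg[OF powr_ge_zero])
    moreover have pos: "s powr \<alpha> > 0" using s by simp
    ultimately have A: "norm (x' s + (s / (\<alpha> + 1)) *\<^sub>R g0) \<le> B * s / (\<alpha> + 1)"
      using mult_le_cancel_left_pos[OF pos] by blast
    have "norm (x' s) \<le> norm (x' s + (s / (\<alpha> + 1)) *\<^sub>R g0) + norm ((s / (\<alpha> + 1)) *\<^sub>R g0)"
      by (metis add_diff_cancel norm_triangle_ineq4)
    also have "\<dots> \<le> B * s / (\<alpha> + 1) + s / (\<alpha> + 1) * norm g0" using A s alpha_pos by simp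
    also have "\<dots> = s * ((B + norm g0) / (\<alpha> + 1))" by (simp add: algebra_simps add_divide_distrib)
    finally show ?thesis using s by (simp add: divide_le_eq mult.commute)
  qed
  define S where "S = {0<..t}"
  define m where "m = (SUP s\<in>S. norm (x' s) / s)"
  have tS: "t \<in> S" unfolding S_def using t0 by simp
  have bdd: "bdd_above ((\<lambda>s. norm (x' s) / s) ` S)"
    by (rule bdd_aboveI2[where M="(B + norm g0) / (\<alpha> + 1)"]) (use step1 in \<open>auto simp: S_def\<close>)
  have mup: "norm (x' s) / s \<le> m" if "s \<in> S" for s unfolding m_def using that bdd by (rule cSUP_upper)
  have vb: "norm (x' s) \<le> m * s" if "0 < s" "s \<le> t" for s
    using mup[of s] that by (simp add: S_def divide_le_eq)
  have m0: "m \<ge> 0" using mup[OF tS] t0 by (meson divide_nonneg_nonneg norm_ge_zero order_trans less_imp_le)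
  have xz: "norm (x s - z) \<le> m * s^2 / 2" if s: "0 \<le> s" "s \<le> t" for s
  proof -
    have "norm (x s - x 0) \<le> m * s^2 / 2 - m * 0^2 / 2"
    proof (rule mvt_norm[where F'=x' and h'="\<lambda>r. m * r"])
      show "0 \<le> s" using s by simp
      show "continuous_on {0..s} x" using x_cont by (rule continuous_on_subset) auto
      show "continuous_on {0..s} (\<lambda>r. m * r^2 / 2)" by (intro continuous_intros) auto
      show "(x has_vector_derivative x' r) (at r)" if "0 < r" "r < s" for r using x_at that by simp
      show "norm (x' r) \<le> m * r" if "0 < r" "r < s" for r using vb that s by simp
      show "((\<lambda>r. m * r^2 / 2) has_real_derivative m * r) (at r)" for r
        by (auto intro!: derivative_eq_intros)
    qed
    then show ?thesis using init_pos by simp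
  qed
  have E'b: "norm (E' r) \<le> r powr \<alpha> * (m * r^2 * L / 2 + m * r * \<beta> * L)" if r: "0 < r" "r \<le> t" for r
  proof -
    have "norm (g0 - grad (x r)) \<le> L * norm (x r - z)"
      unfolding g0_def using lipschitz[of z "x r"] by (simp add: norm_minus_commute)
    also have "\<dots> \<le> L * (m * r^2 / 2)" using xz[of r] r L_pos by (intro mult_left_mono) auto
    finally have A: "norm (g0 - grad (x r)) \<le> m * r^2 * L / 2" by (simp add: mult.commute mult.left_commute)
    have "\<beta> * L * norm (x' r) \<le> \<beta> * L * (m * r)" using vb[OF r] beta_nonneg L_pos
      by (intro mult_left_mono) auto
    with A have "norm (g0 - grad (x r)) + \<beta> * L * norm (x' r) \<le> m * r^2 * L / 2 + m * r * \<beta> * L"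
      by (simp add: algebra_simps)
    then have "r powr \<alpha> * (norm (g0 - grad (x r)) + \<beta> * L * norm (x' r))
        \<le> r powr \<alpha> * (m * r^2 * L / 2 + m * r * \<beta> * L)" by (intro mult_left_mono) auto
    then show ?thesis using E'_norm[of r] by linarith
  qed
  have eb: "norm (x' s + (s / (\<alpha> + 1)) *\<^sub>R g0) \<le> m * s * (1 - Ht)" if s: "0 < s" "s \<le> t" for s
  proof -
    have "norm (x' s + (s / (\<alpha> + 1)) *\<^sub>R g0) \<le> m * s * (1 - Hfun \<alpha> \<beta> L s)"
      by (rule Ebound[OF s m0]) (use E'b s in \<open>auto simp: Hfun_def\<close>)
    also have "\<dots> \<le> m * s * (1 - Ht)" unfolding Ht_def using H_mono[OF alpha_pos beta_nonneg L_pos, of s t] s m0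
      by (intro mult_left_mono) auto
    finally show ?thesis .
  qed
  have step2: "norm (x' s) / s \<le> c + m * (1 - Ht)" if s: "0 < s" "s \<le> t" for s
  proof -
    have "norm (x' s) \<le> norm (x' s + (s / (\<alpha> + 1)) *\<^sub>R g0) + norm ((s / (\<alpha> + 1)) *\<^sub>R g0)"
      by (metis add_diff_cancel norm_triangle_ineq4)
    also have "\<dots> \<le> m * s * (1 - Ht) + s * c" using eb[OF s] s alpha_pos unfolding c_def by simp
    also have "\<dots> = s * (c + m * (1 - Ht))" by (simp add: algebra_simps)
    finally show ?thesis using s by (simp add: divide_le_eq mult.commute)
  qed
  have mle: "m \<le> c + m * (1 - Ht)"
  proof -
    have "(SUP s\<in>S. norm (x' s) / s) \<le> c + m * (1 - Ht)"
      by (rule cSUP_least) (use tS step2 in \<open>auto simp: S_def\<close>)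
    then show ?thesis unfolding m_def[symmetric] .
  qed
  have mH: "m \<le> c / Ht" using mle Ht by (simp add: le_divide_eq algebra_simps)
  have nv: "norm (x' t) \<le> c * t / Ht"
  proof -
    have "norm (x' t) \<le> m * t" using vb t0 by simp
    also have "\<dots> \<le> c / Ht * t" using mH t0 by (intro mult_right_mono) auto
    finally show ?thesis by simp
  qed
  have nxz: "norm (x t - z) \<le> c * t^2 / (2 * Ht)"
  proof -
    have "norm (x t - z) \<le> m * t^2 / 2" using xz t0 by simp
    also have "\<dots> \<le> c / Ht * t^2 / 2" using mH t0 by (intro divide_right_mono mult_right_mono) auto
    finally show ?thesis by simp
  qed
  define v where "v = x' t"
  define w where "w = (t / (\<alpha> + 1)) *\<^sub>R g0"
  define e where "e = v + w"
  have ne: "norm e \<le> c * t * (1 - Ht) / Ht"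
  proof -
    have "norm e \<le> m * t * (1 - Ht)" unfolding e_def v_def w_def using eb t0 by simp
    also have "\<dots> \<le> c / Ht * t * (1 - Ht)" using mH t0 Ht by (intro mult_right_mono) auto
    finally show ?thesis by simp
  qed
  have hvb: "inner v (hess (x t) v) \<le> L * (c * t / Ht)^2"
  proof -
    have "inner v (hess (x t) v) \<le> norm v * norm (hess (x t) v)" by (rule norm_cauchy_schwarz)
    also have "\<dots> \<le> norm v * (L * norm v)" using hessb by (intro mult_left_mono) auto
    also have "\<dots> = L * (norm v)^2" by (simp add: power2_eq_square)
    also have "\<dots> \<le> L * (c * t / Ht)^2" using nv L_pos unfolding v_def
      by (intro mult_left_mono power_mono) auto
    finally show ?thesis .
  qed
  have gxb: "inner v (grad (x t) - g0) \<le> L * t^2 / 2 * (c^2 * t / Ht^2)"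
  proof -
    have "inner v (grad (x t) - g0) \<le> norm v * norm (grad (x t) - g0)" by (rule norm_cauchy_schwarz)
    also have "\<dots> \<le> norm v * (L * norm (x t - z))" unfolding g0_def using lipschitz
      by (intro mult_left_mono) auto
    also have "\<dots> \<le> (c * t / Ht) * (L * (c * t^2 / (2 * Ht)))" using nv nxz L_pos c0 t0 Ht unfolding v_def
      by (intro mult_mono mult_left_mono) auto
    also have "\<dots> = L * t^2 / 2 * (c^2 * t / Ht^2)" by (simp add: field_simps power2_eq_square)
    finally show ?thesis .
  qed
  have key: "inner v (-(\<alpha>/t) *\<^sub>R v - \<beta> *\<^sub>R hess (x t) v - grad (x t)) + lam*(\<alpha>/t)*(norm v)^2 \<ge>
    ((1+\<alpha>*lam)*Ht^2 - \<alpha>*(1-lam)*(1-Ht)^2 - \<beta>*L*t - L*t^2/2 - \<bar>1+\<alpha>*(2*lam-1)\<bar>*Ht*(1-Ht)) * (c^2*t/Ht^2)"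
  proof (rule final_alg[where e=e and w=w and gz=g0])
    show "g0 = ((\<alpha> + 1) / t) *\<^sub>R w" unfolding w_def using t0 alpha_pos by simp
    show "norm w = c * t" unfolding w_def c_def using t0 alpha_pos by simp
  qed (use t0 alpha_pos lambda beta_nonneg L_pos Ht c0 ne hvb gxb in \<open>auto simp: e_def\<close>)
  have rhs: "Gfun \<alpha> \<beta> L lam t * (t * (norm (grad z))^2 / ((\<alpha> + 1)^2 * (Hfun \<alpha> \<beta> L t)^2))
     = ((1+\<alpha>*lam)*Ht^2 - \<alpha>*(1-lam)*(1-Ht)^2 - \<beta>*L*t - L*t^2/2 - \<bar>1+\<alpha>*(2*lam-1)\<bar>*Ht*(1-Ht)) * (c^2*t/Ht^2)"
    unfolding Gfun_def Let_def Ht_def[symmetric] c_def g0_def by (simp add: power_divide)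
  show "x' t \<bullet> x'' t + lam * (\<alpha> / t) * (norm (x' t))^2
       \<ge> Gfun \<alpha> \<beta> L lam t * (t * (norm (grad z))^2 / ((\<alpha> + 1)^2 * (Hfun \<alpha> \<beta> L t)^2))"
    unfolding rhs using key xx'''[OF t0] unfolding v_def by (simp add: power2_norm_eq_inner)
qed

end
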